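(* Let $N$ be a positive integer and let $f:\mathbb{N}\to\mathbb{C}$ be periodic with period $N$. Let $a_n(q)$ be the sequence of polynomials in $q$ defined recursively by \[ a_0(q)=0,\qquad a_n(q) = f(n) + \left(1-q^{n-1}\right)a_{n-1}(q) \quad \text{for } n\in\mathbb{N}. \] Then for $q\in\mathbb{C}$ with $|q|<1$ the limit below exists and \[ \lim_{n\rightarrow\infty}\left( \sum_{1\le\ell\le n} f(\ell) - a_n(q) \right) = (q;q)_\infty \sum_{n\ge0}\frac{q^n}{(q;q)_n} \sum_{1\le j\le N} f(j) \left\lceil\frac{n+1-j}{N}\right\rceil . \]
   Context: For $n\in\mathbb{N}_0\cup\{\infty\}$, $(a;q)_n := \prod_{j=0}^{n-1}(1-aq^j)$. *)

theory Defs
  imports "HOL-Analysis.Analysis"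
begin

definition qpoch :: "complex \<Rightarrow> complex \<Rightarrow> nat \<Rightarrow> complex" where
  "qpoch a q n = (\<Prod>j<n. (1 - a * q ^ j))"

definition qpoch_inf :: "complex \<Rightarrow> complex \<Rightarrow> complex" where
  "qpoch_inf a q = (\<Prod>j. (1 - a * q ^ j))"

fun aseq :: "(nat \<Rightarrow> complex) \<Rightarrow> nat \<Rightarrow> complex \<Rightarrow> complex" where
  "aseq f 0 q = 0"
| "aseq f (Suc n) q = f (Suc n) + (1 - q ^ n) * aseq f n q"

end

theory Submission imports Defs begin


lemma window:
  fixes f :: "nat \<Rightarrow> complex"
  assumes per: "\<forall>n\<ge>1. f (n + N) = f n"
  shows "(\<Sum>l\<in>{m+1..m+N}. f l) = (\<Sum>l=1..N. f l)"
proof (induction m)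
  case 0 then show ?case by simp
next
  case (Suc m)
  show ?case
  proof (cases "N = 0")
    case True then show ?thesis by simp
  next
    case False
    have A: "{m+1..m+N} = insert (m+1) {Suc m+1..Suc m+N} - {Suc m + N}"
      using False by auto
    have "(\<Sum>l\<in>{Suc m+1..Suc m+N}. f l) = (\<Sum>l\<in>{m+1..m+N}. f l) - f (m+1) + f (Suc m + N)"
    proof -
      have B: "{m+1..Suc m+N} = insert (m+1) {Suc m+1..Suc m+N}" by auto
      have C: "{m+1..Suc m+N} = insert (Suc m+N) {m+1..m+N}" using False by auto
      have "(\<Sum>l\<in>{m+1..Suc m+N}. f l) = f (m+1) + (\<Sum>l\<in>{Suc m+1..Suc m+N}. f l)"
        unfolding B by (subst sum.insert) auto
      moreover have "(\<Sum>l\<in>{m+1..Suc m+N}. f l) = f (Suc m + N) + (\<Sum>l\<in>{m+1..m+N}. f l)"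
        unfolding C by (subst sum.insert) auto
      ultimately show ?thesis by (simp add: algebra_simps)
    qed
    moreover have "f (Suc m + N) = f (m+1)" using per[rule_format, of "m+1"] by simp
    ultimately show ?thesis using Suc by simp
  qed
qed

lemma ceil_small1:
  assumes "1 \<le> j" "j \<le> m" "m < N"
  shows "\<lceil>(real m + 1 - real j) / real N\<rceil> = 1"
  using assms by (subst ceiling_eq_iff) (auto simp: field_simps)

lemma ceil_small0:
  assumes "m < j" "j \<le> N"
  shows "\<lceil>(real m + 1 - real j) / real N\<rceil> = 0"
  using assms by (subst ceiling_eq_iff) (auto simp: field_simps)

lemma ceil_shift:
  assumes "N \<ge> 1"
  shows "\<lceil>(real (m + N) + 1 - real j) / real N\<rceil> = \<lceil>(real m + 1 - real j) / real N\<rceil> + 1"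
proof -
  have "(real (m + N) + 1 - real j) / real N = (real m + 1 - real j) / real N + 1"
    using assms by (simp add: field_simps)
  then show ?thesis by simp
qed

lemma FG:
  fixes f :: "nat \<Rightarrow> complex"
  assumes N: "N \<ge> 1" and per: "\<forall>n\<ge>1. f (n + N) = f n"
  shows "(\<Sum>l=1..m. f l) = (\<Sum>j=1..N. f j * of_int \<lceil>(real m + 1 - real j) / real N\<rceil>)"
proof (induction m rule: less_induct)
  case (less m)
  show ?case
  proof (cases "m < N")
    case True
    have "(\<Sum>j=1..N. f j * of_int \<lceil>(real m + 1 - real j) / real N\<rceil>)
        = (\<Sum>j=1..N. if j \<le> m then f j else 0)"
      using True by (intro sum.cong) (auto simp: ceil_small1 ceil_small0)
    also have "\<dots> = (\<Sum>j\<in>{1..N} \<inter> {j. j \<le> m}. f j)"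
      by (simp add: sum.inter_restrict)
    also have "{1..N} \<inter> {j. j \<le> m} = {1..m}" using True by auto
    finally show ?thesis by simp
  next
    case False
    then obtain m' where m': "m = m' + N" by (metis le_add_diff_inverse2 not_less)
    have "m' < m" using m' N by simp
    have split: "{1..m'+N} = {1..m'} \<union> {m'+1..m'+N}" by auto
    have "(\<Sum>l=1..m. f l) = (\<Sum>l=1..m'. f l) + (\<Sum>l\<in>{m'+1..m'+N}. f l)"
      unfolding m' split by (subst sum.union_disjoint) auto
    also have "\<dots> = (\<Sum>l=1..m'. f l) + (\<Sum>l=1..N. f l)" using window[OF per] by simp
    also have "\<dots> = (\<Sum>j=1..N. f j * of_int \<lceil>(real m' + 1 - real j) / real N\<rceil>) + (\<Sum>l=1..N. f l)"
      using less[OF \<open>m' < m\<close>] by simp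
    also have "\<dots> = (\<Sum>j=1..N. f j * of_int \<lceil>(real m + 1 - real j) / real N\<rceil>)"
      unfolding m' ceil_shift[OF N] by (simp add: sum.distrib algebra_simps)
    finally show ?thesis .
  qed
qed


lemma normlt: "norm (q::complex) < 1 \<Longrightarrow> norm (q * q ^ j) < 1"
proof -
  assume q: "norm q < 1"
  have "norm (q * q ^ j) = norm q * norm q ^ j" by (simp add: norm_mult norm_power)
  also have "\<dots> \<le> norm q" using q by (intro mult_left_le) (auto simp: power_le_one)
  also note q
  finally show ?thesis .
qed

lemma qpoch_Suc: "qpoch q q (Suc n) = qpoch q q n * (1 - q ^ Suc n)"
  by (simp add: qpoch_def)

lemma qpoch_nz: "norm (q::complex) < 1 \<Longrightarrow> qpoch q q n \<noteq> 0"
proof -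
  assume q: "norm q < 1"
  have "q * q ^ j \<noteq> 1" for j
  proof
    assume "q * q ^ j = 1"
    then have "norm (q * q ^ j) = 1" by simp
    moreover have "norm (q * q ^ j) < 1" using q by (rule normlt)
    ultimately show False by simp
  qed
  then show ?thesis unfolding qpoch_def by (simp add: prod_zero_iff)
qed

lemma aseq_id:
  fixes f :: "nat \<Rightarrow> complex"
  assumes q: "norm q < 1"
  shows "(\<Sum>l=1..Suc n. f l) - aseq f (Suc n) q
     = qpoch q q n * (\<Sum>m<Suc n. q ^ m / qpoch q q m * (\<Sum>l=1..m. f l))"
proof (induction n)
  case 0 then show ?case by (simp add: qpoch_def)
next
  case (Suc n)
  define D where "D = (\<Sum>l=1..Suc n. f l) - aseq f (Suc n) q"
  define T where "T = (\<Sum>m<Suc n. q ^ m / qpoch q q m * (\<Sum>l=1..m. f l))"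
  have nz: "qpoch q q (Suc n) \<noteq> 0" using qpoch_nz[OF q] .
  have "(\<Sum>l=1..Suc (Suc n). f l) - aseq f (Suc (Suc n)) q
      = q ^ Suc n * (\<Sum>l=1..Suc n. f l) + (1 - q ^ Suc n) * D"
    unfolding D_def by (simp add: algebra_simps)
  also have "D = qpoch q q n * T" using Suc unfolding D_def T_def by simp
  also have "q ^ Suc n * (\<Sum>l=1..Suc n. f l) + (1 - q ^ Suc n) * (qpoch q q n * T)
     = qpoch q q (Suc n) * (T + q ^ Suc n / qpoch q q (Suc n) * (\<Sum>l=1..Suc n. f l))"
    using nz by (simp add: qpoch_Suc field_simps)
  also have "T + q ^ Suc n / qpoch q q (Suc n) * (\<Sum>l=1..Suc n. f l)
     = (\<Sum>m<Suc (Suc n). q ^ m / qpoch q q m * (\<Sum>l=1..m. f l))"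
    unfolding T_def by simp
  finally show ?case .
qed

lemma qpoch_lim:
  fixes q :: complex
  assumes q: "norm q < 1"
  shows "(\<lambda>n. qpoch q q n) \<longlonglongrightarrow> qpoch_inf q q" and "qpoch_inf q q \<noteq> 0"
proof -
  let ?g = "\<lambda>j. 1 - q * q ^ j"
  have "summable (\<lambda>j. norm (?g j - 1))"
    using q by (simp add: norm_mult norm_power)
  then have ac: "abs_convergent_prod ?g"
    by (simp add: abs_convergent_prod_conv_summable)
  then have cp: "convergent_prod ?g" by (rule abs_convergent_prod_imp_convergent_prod)
  have "(\<lambda>n. \<Prod>i\<le>n. ?g i) \<longlonglongrightarrow> prodinf ?g" by (rule convergent_prod_LIMSEQ[OF cp])
  then have "(\<lambda>n. qpoch q q (Suc n)) \<longlonglongrightarrow> qpoch_inf q q"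
    by (simp add: qpoch_def qpoch_inf_def lessThan_Suc_atMost)
  then show "(\<lambda>n. qpoch q q n) \<longlonglongrightarrow> qpoch_inf q q" by (rule LIMSEQ_imp_Suc)
  have "?g i \<noteq> 0" for i
  proof
    assume "?g i = 0"
    then have "q * q ^ i = 1" by simp
    then have "norm (q * q ^ i) = 1" by simp
    moreover have "norm (q * q ^ i) < 1" using q by (rule normlt)
    ultimately show False by simp
  qed
  then show "qpoch_inf q q \<noteq> 0" unfolding qpoch_inf_def by (rule prodinf_nonzero[OF cp])
qed

theorem corollary1p4:
  fixes f :: "nat \<Rightarrow> complex" and N :: nat and q :: complex
  assumes "N \<ge> 1"
    and "\<forall>n\<ge>1. f (n + N) = f n"
    and "norm q < 1"
  shows "(\<lambda>n. (\<Sum>l=1..n. f l) - aseq f n q) \<longlonglongrightarrow>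
           qpoch_inf q q *
           (\<Sum>n. q ^ n / qpoch q q n *
              (\<Sum>j=1..N. f j * of_int \<lceil>(real n + 1 - real j) / real N\<rceil>))"
proof -
  note q = assms(3)
  define G where "G m = (\<Sum>j=1..N. f j * of_int \<lceil>(real m + 1 - real j) / real N\<rceil>)" for m
  define c where "c m = q ^ m / qpoch q q m * G m" for m
  have FG': "(\<Sum>l=1..m. f l) = G m" for m unfolding G_def by (rule FG[OF assms(1,2)])
  define K where "K = (\<Sum>j=1..N. norm (f j))"
  have Gb: "norm (G m) \<le> K * real (Suc m)" for m
  proof -
    have "norm (G m) \<le> (\<Sum>j=1..N. norm (f j * of_int \<lceil>(real m + 1 - real j) / real N\<rceil>))"
      unfolding G_def by (rule norm_sum)
    also have "\<dots> \<le> (\<Sum>j=1..N. norm (f j) * real (Suc m))"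
    proof (rule sum_mono)
      fix j assume j: "j \<in> {1..N}"
      have "(real m + 1 - real j) / real N > -1" using j by (auto simp: field_simps)
      then have c0: "\<lceil>(real m + 1 - real j) / real N\<rceil> \<ge> 0"
        by simp
      have h1: "real (Suc m) \<le> real (Suc m) * real N" using assms(1) by simp
      have "(real m + 1 - real j) / real N \<le> real (Suc m)"
      proof -
        have h2: "real m + 1 - real j \<le> (real m + 1) * real N"
        proof -
          have "(real m + 1) * 1 \<le> (real m + 1) * real N"
            by (rule mult_left_mono) (use assms(1) in auto)
          then show ?thesis using of_nat_0_le_iff[of j] by (simp only: mult_1_right)
        qed
        show ?thesis using h2 assms(1) by (subst pos_divide_le_eq) (simp_all add: add.commute)
      qed
      then have c1: "\<lceil>(real m + 1 - real j) / real N\<rceil> \<le> int (Suc m)"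
        by (metis ceiling_le_iff of_int_of_nat_eq)
      have "norm (complex_of_int \<lceil>(real m + 1 - real j) / real N\<rceil>) \<le> real (Suc m)"
        using c0 c1 by (simp only: norm_of_int)
      then show "norm (f j * complex_of_int \<lceil>(real m + 1 - real j) / real N\<rceil>) \<le> norm (f j) * real (Suc m)"
        by (simp add: norm_mult mult_left_mono)
    qed
    also have "\<dots> = K * real (Suc m)" unfolding K_def by (simp add: sum_distrib_right)
    finally show ?thesis .
  qed
  have K0: "K \<ge> 0" unfolding K_def by (simp add: sum_nonneg)
  obtain Pl: "(\<lambda>n. qpoch q q n) \<longlonglongrightarrow> qpoch_inf q q" and Pnz: "qpoch_inf q q \<noteq> 0"
    using qpoch_lim[OF q] by blast
  have ev: "eventually (\<lambda>n. norm (qpoch q q n) > norm (qpoch_inf q q) / 2) sequentially"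
    using tendsto_norm[OF Pl] Pnz by (intro order_tendstoD) auto
  define r where "r = norm q"
  have r: "0 \<le> r" "r < 1" using q unfolding r_def by auto
  have sr: "summable (\<lambda>n. real (Suc n) * r ^ n)"
  proof -
    have "summable (\<lambda>n. diffs (\<lambda>_. 1::real) n * r ^ n)"
      by (rule termdiff_converges[where K=1]) (use r in auto)
    then show ?thesis by (simp add: diffs_def)
  qed
  have sc: "summable c"
  proof (rule summable_comparison_test_ev)
    show "eventually (\<lambda>n. norm (c n) \<le> (2 * K / norm (qpoch_inf q q)) * (real (Suc n) * r ^ n)) sequentially"
      using ev
    proof eventually_elim
      case (elim n)
      have pos: "norm (qpoch_inf q q) > 0" using Pnz by simp
      have "norm (c n) = r ^ n * norm (G n) / norm (qpoch q q n)"
        unfolding c_def r_def by (simp add: norm_mult norm_divide norm_power)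
      also have "\<dots> \<le> r ^ n * (K * real (Suc n)) / (norm (qpoch_inf q q) / 2)"
        using elim pos r Gb[of n] K0
        by (intro frac_le mult_left_mono mult_nonneg_nonneg) auto
      also have "\<dots> = (2 * K / norm (qpoch_inf q q)) * (real (Suc n) * r ^ n)"
        using pos by (simp add: field_simps)
      finally show ?case .
    qed
    show "summable (\<lambda>n. (2 * K / norm (qpoch_inf q q)) * (real (Suc n) * r ^ n))"
      by (rule summable_mult[OF sr])
  qed
  have "(\<lambda>n. (\<Sum>m<Suc n. c m)) \<longlonglongrightarrow> suminf c"
    using summable_LIMSEQ[OF sc] by (rule LIMSEQ_Suc)
  then have "(\<lambda>n. qpoch q q n * (\<Sum>m<Suc n. c m)) \<longlonglongrightarrow> qpoch_inf q q * suminf c"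
    by (intro tendsto_mult Pl)
  moreover have "(\<Sum>l=1..Suc n. f l) - aseq f (Suc n) q = qpoch q q n * (\<Sum>m<Suc n. c m)" for n
    using aseq_id[OF q, of f n] unfolding c_def FG' by simp
  ultimately have "(\<lambda>n. (\<Sum>l=1..Suc n. f l) - aseq f (Suc n) q) \<longlonglongrightarrow> qpoch_inf q q * suminf c"
    by simp
  then have "(\<lambda>n. (\<Sum>l=1..n. f l) - aseq f n q) \<longlonglongrightarrow> qpoch_inf q q * suminf c"
    by (rule LIMSEQ_imp_Suc)
  then show ?thesis unfolding c_def G_def .
qed

end
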